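(* Let $m\ge2$, $1\le i\le m-1$, and let $f(z)=f(z_1,\dots,z_m)$ be a rational function over $\mathbb Q(q,t)$ which is antisymmetric in $z_i$ and $z_{i+1}$. Then \[ \mathbf H^m_{q,t}\bigl(\Omega[M\,z_i/z_{i+1}]\,f(z)\bigr)=0,\qquad\text{where } \Omega[Mz]=\frac{(1-qz)(1-tz)}{(1-z)(1-qtz)}. \]
   Context: $M=(1-q)(1-t)$. For a rational function $g(z_1,\dots,z_m)$, $\boldsymbol\sigma(g)=\sum_{w\in S_m}w\bigl(g/\prod_{j<k}(1-z_k/z_j)\bigr)$ ($S_m$ permuting the variables) and \[ \mathbf H^m_{q,t}(g)=\boldsymbol\sigma\Bigl(g\,\frac{\prod_{j<k}(1-qt\,z_j/z_k)}{\prod_{j<k}(1-q\,z_j/z_k)(1-t\,z_j/z_k)}\Bigr), \] a symmetric rational function. *)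

theory Defs
  imports Complex_Main "HOL-Library.Poly_Mapping" "HOL-Computational_Algebra.Fraction_Field"
          "HOL-Combinatorics.Permutations" "HOL-Combinatorics.Transposition"
begin

text \<open>Polynomials over the rationals in countably many variables x_0, x_1, ...
  (monomials are finitely supported exponent vectors), and their fraction field.
  We use x_0 = q, x_1 = t, and x_(j+1) = z_j for j = 1..m.  Thus
  Q(q,t)(z_1,...,z_m) is the subfield of rational functions involving only the
  variables x_0..x_(m+1).\<close>

type_synonym rpoly = "(nat \<Rightarrow>\<^sub>0 nat) \<Rightarrow>\<^sub>0 rat"
type_synonym ratfun = "rpoly fract"

definition Xv :: "nat \<Rightarrow> ratfun" where
  "Xv k = Fract (Poly_Mapping.single (Poly_Mapping.single k 1) 1) 1"

definition qv :: ratfun where "qv = Xv 0"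
definition tv :: ratfun where "tv = Xv 1"
definition zv :: "nat \<Rightarrow> ratfun" where "zv j = Xv (Suc j)"

definition poly_in_vars :: "nat set \<Rightarrow> rpoly \<Rightarrow> bool" where
  "poly_in_vars N p \<longleftrightarrow> (\<forall>\<alpha> \<in> Poly_Mapping.keys p. Poly_Mapping.keys \<alpha> \<subseteq> N)"

definition ratfun_in_vars :: "nat set \<Rightarrow> ratfun \<Rightarrow> bool" where
  "ratfun_in_vars N x \<longleftrightarrow>
     (\<exists>a b. b \<noteq> 0 \<and> x = Fract a b \<and> poly_in_vars N a \<and> poly_in_vars N b)"

definition ren_poly :: "(nat \<Rightarrow> nat) \<Rightarrow> rpoly \<Rightarrow> rpoly" where
  "ren_poly \<sigma> p = Poly_Mapping.map_key (Poly_Mapping.map_key \<sigma>) p"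

definition ren_ratfun :: "(nat \<Rightarrow> nat) \<Rightarrow> ratfun \<Rightarrow> ratfun" where
  "ren_ratfun \<sigma> x =
     (SOME y. \<exists>a b. b \<noteq> 0 \<and> x = Fract a b \<and> y = Fract (ren_poly \<sigma> a) (ren_poly \<sigma> b))"

text \<open>A permutation w of {1..m} acts on rational functions by z_j \<mapsto> z_(w j),
  fixing q and t.\<close>
definition var_perm :: "(nat \<Rightarrow> nat) \<Rightarrow> nat \<Rightarrow> nat" where
  "var_perm w k = (if k \<ge> 2 then Suc (w (k - 1)) else k)"

definition act :: "(nat \<Rightarrow> nat) \<Rightarrow> ratfun \<Rightarrow> ratfun" where
  "act w g = ren_ratfun (var_perm w) g"

definition symz :: "nat \<Rightarrow> ratfun \<Rightarrow> ratfun" where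
  "symz m g = (\<Sum>w | w permutes {1..m}.
      act w (g / (\<Prod>j\<in>{1..m}. \<Prod>k\<in>{j<..m}. (1 - zv k / zv j))))"

definition Hqt :: "nat \<Rightarrow> ratfun \<Rightarrow> ratfun" where
  "Hqt m g = symz m (g * (\<Prod>j\<in>{1..m}. \<Prod>k\<in>{j<..m}.
      (1 - qv * tv * zv j / zv k) / ((1 - qv * zv j / zv k) * (1 - tv * zv j / zv k))))"

text \<open>\<Omega>[M x] with M = (1-q)(1-t).\<close>
definition OmegaM :: "ratfun \<Rightarrow> ratfun" where
  "OmegaM x = ((1 - qv * x) * (1 - tv * x)) / ((1 - x) * (1 - qv * tv * x))"

end

theory Submission
  imports Defs
begin

lemma lookup_map_key: "inj f \<Longrightarrow> Poly_Mapping.lookup (Poly_Mapping.map_key f p) k = Poly_Mapping.lookup p (f k)"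
  by (simp add: Poly_Mapping.map_key.rep_eq)

lemma map_key_mult:
  fixes \<phi> :: "'a::monoid_add \<Rightarrow> 'a" and f g :: "'a \<Rightarrow>\<^sub>0 'b::semiring_0"
  assumes bij: "bij \<phi>" and add: "\<And>a b. \<phi> (a + b) = \<phi> a + \<phi> b"
  shows "Poly_Mapping.map_key \<phi> (f * g) = Poly_Mapping.map_key \<phi> f * Poly_Mapping.map_key \<phi> g"
proof (rule poly_mapping_eqI)
  fix k
  have inj: "inj \<phi>" using bij bij_is_inj by blast
  have "Poly_Mapping.lookup (Poly_Mapping.map_key \<phi> (f*g)) k
      = (\<Sum>l. Poly_Mapping.lookup f l * (\<Sum>q. Poly_Mapping.lookup g q when \<phi> k = l + q))"
    by (simp add: lookup_map_key inj lookup_mult)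
  also have "\<dots> = (\<Sum>l. Poly_Mapping.lookup f (\<phi> l) * (\<Sum>q. Poly_Mapping.lookup g q when \<phi> k = \<phi> l + q))"
    by (rule Sum_any.reindex_cong[OF bij]) (simp add: o_def)
  also have "\<dots> = (\<Sum>l. Poly_Mapping.lookup f (\<phi> l) * (\<Sum>q. Poly_Mapping.lookup g (\<phi> q) when k = l + q))"
  proof -
    have "(\<Sum>q. Poly_Mapping.lookup g q when \<phi> k = \<phi> l + q) = (\<Sum>q. Poly_Mapping.lookup g (\<phi> q) when k = l + q)" for l
    proof -
      have "(\<Sum>q. Poly_Mapping.lookup g q when \<phi> k = \<phi> l + q) = (\<Sum>q. Poly_Mapping.lookup g (\<phi> q) when \<phi> k = \<phi> l + \<phi> q)"
        by (rule Sum_any.reindex_cong[OF bij]) (simp add: o_def)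
      also have "\<dots> = (\<Sum>q. Poly_Mapping.lookup g (\<phi> q) when k = l + q)"
        by (simp add: add[symmetric] inj_eq[OF inj])
      finally show ?thesis .
    qed
    then show ?thesis by simp
  qed
  also have "\<dots> = Poly_Mapping.lookup (Poly_Mapping.map_key \<phi> f * Poly_Mapping.map_key \<phi> g) k"
    by (simp add: lookup_map_key inj lookup_mult)
  finally show "Poly_Mapping.lookup (Poly_Mapping.map_key \<phi> (f*g)) k = Poly_Mapping.lookup (Poly_Mapping.map_key \<phi> f * Poly_Mapping.map_key \<phi> g) k" .
qed

abbreviation lk where "lk \<equiv> Poly_Mapping.lookup"
abbreviation mk where "mk \<equiv> Poly_Mapping.map_key"

lemma bij_mk:
  fixes \<sigma> :: "nat \<Rightarrow> nat"
  assumes "bij \<sigma>" shows "bij (mk \<sigma> :: (nat \<Rightarrow>\<^sub>0 nat) \<Rightarrow> _)"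
proof (rule o_bij)
  have i1: "inj \<sigma>" and i2: "inj (inv \<sigma>)" using assms bij_is_inj bij_imp_bij_inv by blast+
  show "mk (inv \<sigma>) \<circ> mk \<sigma> = (id :: (nat \<Rightarrow>\<^sub>0 nat) \<Rightarrow> _)"
    by (rule ext) (simp add: map_key_compose[OF i2 i1] bij_is_surj[OF assms] surj_iff[THEN iffD1] map_key_id[unfolded id_def[symmetric]])
  show "mk \<sigma> \<circ> mk (inv \<sigma>) = (id :: (nat \<Rightarrow>\<^sub>0 nat) \<Rightarrow> _)"
    by (rule ext) (simp add: map_key_compose[OF i1 i2] i1 map_key_id[unfolded id_def[symmetric]])
qed

lemma add_mk: "inj (\<sigma>::nat\<Rightarrow>nat) \<Longrightarrow> mk \<sigma> (a + b) = mk \<sigma> a + mk \<sigma> (b :: nat \<Rightarrow>\<^sub>0 nat)"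
  by (rule map_key_plus)

context fixes \<sigma> :: "nat \<Rightarrow> nat" assumes bs: "bij \<sigma>"
begin

lemma inj_s: "inj \<sigma>" using bs bij_is_inj by blast
lemma bij_mks: "bij (mk \<sigma> :: (nat \<Rightarrow>\<^sub>0 nat) \<Rightarrow> _)" using bij_mk[OF bs] .
lemma inj_mks: "inj (mk \<sigma> :: (nat \<Rightarrow>\<^sub>0 nat) \<Rightarrow> _)" using bij_mks bij_is_inj by blast

lemma ren_mult: "ren_poly \<sigma> (p * q) = ren_poly \<sigma> p * ren_poly \<sigma> q"
  unfolding ren_poly_def by (rule map_key_mult[OF bij_mks add_mk[OF inj_s]])

lemma ren_add: "ren_poly \<sigma> (p + q) = ren_poly \<sigma> p + ren_poly \<sigma> q"
  unfolding ren_poly_def by (rule map_key_plus[OF inj_mks])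

lemma ren_zero: "ren_poly \<sigma> 0 = 0"
  unfolding ren_poly_def by (rule map_key_zero[OF inj_mks])

lemma lk_ren: "lk (ren_poly \<sigma> p) a = lk p (mk \<sigma> a)"
  unfolding ren_poly_def by (rule lookup_map_key[OF inj_mks])

lemma ren_one: "ren_poly \<sigma> 1 = 1"
proof (rule poly_mapping_eqI)
  fix a :: "nat \<Rightarrow>\<^sub>0 nat"
  have "mk \<sigma> a = 0 \<longleftrightarrow> a = 0"
    using inj_mks map_key_zero[OF inj_s] by (metis injD)
  then show "lk (ren_poly \<sigma> 1) a = lk 1 a" by (simp add: lk_ren lookup_one)
qed

lemma ren_uminus: "ren_poly \<sigma> (- p) = - ren_poly \<sigma> p"
  by (rule poly_mapping_eqI) (simp add: lk_ren)

lemma ren_eq0: "ren_poly \<sigma> p = 0 \<longleftrightarrow> p = 0"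
proof
  assume "ren_poly \<sigma> p = 0"
  then have "\<forall>a. lk p (mk \<sigma> a) = 0" by (metis lk_ren lookup_zero)
  then have "\<forall>b. lk p b = 0" using bij_mks by (metis bij_pointE)
  then show "p = 0" by (simp add: poly_mapping_eqI)
qed (simp add: ren_zero)

lemma ren_X: "ren_poly \<sigma> (Poly_Mapping.single (Poly_Mapping.single k 1) 1) = Poly_Mapping.single (Poly_Mapping.single (\<sigma> k) 1) 1"
proof -
  have "mk \<sigma> (Poly_Mapping.single (\<sigma> k) (1::nat)) = Poly_Mapping.single k 1"
    by (rule map_key_single[OF inj_s])
  then show ?thesis unfolding ren_poly_def
    by (metis map_key_single[OF inj_mks])
qed

lemma ren_Fract: "b \<noteq> 0 \<Longrightarrow> ren_ratfun \<sigma> (Fract a b) = Fract (ren_poly \<sigma> a) (ren_poly \<sigma> b)"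
  unfolding ren_ratfun_def
proof (rule some_equality)
  assume b: "b \<noteq> 0"
  show "\<exists>a' b'. b' \<noteq> 0 \<and> Fract a b = Fract a' b' \<and> Fract (ren_poly \<sigma> a) (ren_poly \<sigma> b) = Fract (ren_poly \<sigma> a') (ren_poly \<sigma> b')"
    using b by blast
  fix y assume "\<exists>a' b'. b' \<noteq> 0 \<and> Fract a b = Fract a' b' \<and> y = Fract (ren_poly \<sigma> a') (ren_poly \<sigma> b')"
  then obtain a' b' where b': "b' \<noteq> 0" and e: "Fract a b = Fract a' b'" and y: "y = Fract (ren_poly \<sigma> a') (ren_poly \<sigma> b')"
    by blast
  from e b b' have "a * b' = a' * b" by (simp add: eq_fract)
  then have "ren_poly \<sigma> a * ren_poly \<sigma> b' = ren_poly \<sigma> a' * ren_poly \<sigma> b" by (metis ren_mult)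
  then show "y = Fract (ren_poly \<sigma> a) (ren_poly \<sigma> b)" using y b b' by (simp add: eq_fract ren_eq0)
qed


lemma R_add: "ren_ratfun \<sigma> (x + y) = ren_ratfun \<sigma> x + ren_ratfun \<sigma> y"
proof -
  obtain a b where x: "x = Fract a b" "b \<noteq> 0" by (cases x)
  obtain c d where y: "y = Fract c d" "d \<noteq> 0" by (cases y)
  have "x + y = Fract (a * d + c * b) (b * d)" using x y by simp
  moreover have "b * d \<noteq> 0" using x y by simp
  moreover have "ren_poly \<sigma> b \<noteq> 0" "ren_poly \<sigma> d \<noteq> 0" using x y ren_eq0 by auto
  ultimately show ?thesis using x y
    by (simp add: ren_Fract ren_add ren_mult del: add_fract)
      (simp add: add_fract)
qed

lemma R_mult: "ren_ratfun \<sigma> (x * y) = ren_ratfun \<sigma> x * ren_ratfun \<sigma> y"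
  by (cases x, cases y) (simp add: ren_Fract ren_mult ren_eq0)

lemma R_uminus: "ren_ratfun \<sigma> (- x) = - ren_ratfun \<sigma> x"
  by (cases x) (simp add: ren_Fract ren_uminus ren_eq0)

lemma R_one: "ren_ratfun \<sigma> 1 = 1"
  by (simp add: fract_expand ren_Fract ren_one)

lemma R_zero: "ren_ratfun \<sigma> 0 = 0"
  by (simp add: fract_expand ren_Fract ren_zero ren_one)

lemma R_inverse: "ren_ratfun \<sigma> (inverse x) = inverse (ren_ratfun \<sigma> x)"
proof (cases x)
  case (Fract a b)
  then show ?thesis
    by (cases "a = 0") (simp_all add: ren_Fract ren_zero fract_collapse ren_eq0 R_zero)
qed

lemma R_divide: "ren_ratfun \<sigma> (x / y) = ren_ratfun \<sigma> x / ren_ratfun \<sigma> y"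
  by (simp add: divide_inverse R_mult R_inverse)

lemma R_diff: "ren_ratfun \<sigma> (x - y) = ren_ratfun \<sigma> x - ren_ratfun \<sigma> y"
  by (simp only: diff_conv_add_uminus R_add R_uminus)

lemma R_sum: "ren_ratfun \<sigma> (sum g A) = (\<Sum>a\<in>A. ren_ratfun \<sigma> (g a))"
  by (induction A rule: infinite_finite_induct) (simp_all add: R_zero R_add)

lemma R_prod: "ren_ratfun \<sigma> (prod g A) = (\<Prod>a\<in>A. ren_ratfun \<sigma> (g a))"
  by (induction A rule: infinite_finite_induct) (simp_all add: R_one R_mult)

lemma R_X: "ren_ratfun \<sigma> (Xv k) = Xv (\<sigma> k)"
  using ren_X[of k] by (simp add: Xv_def ren_Fract ren_one)

end

lemma ren_comp:
  assumes s: "bij \<sigma>" and t: "bij \<tau>"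
  shows "ren_poly (\<sigma> \<circ> \<tau>) p = ren_poly \<sigma> (ren_poly \<tau> p)"
proof -
  have is1: "inj \<sigma>" and it: "inj \<tau>" using s t bij_is_inj by blast+
  have "mk (\<sigma> \<circ> \<tau>) = (mk \<tau> \<circ> mk \<sigma> :: (nat \<Rightarrow>\<^sub>0 nat) \<Rightarrow> _)"
    by (rule ext) (simp add: map_key_compose[OF it is1])
  then show ?thesis unfolding ren_poly_def
    by (simp add: map_key_compose[OF inj_mks[OF s] inj_mks[OF t]])
qed

lemma R_comp:
  assumes s: "bij \<sigma>" and t: "bij \<tau>"
  shows "ren_ratfun (\<sigma> \<circ> \<tau>) x = ren_ratfun \<sigma> (ren_ratfun \<tau> x)"
proof (cases x)
  case (Fract a b)
  have st: "bij (\<sigma> \<circ> \<tau>)" using s t bij_comp by blast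
  show ?thesis using Fract
    by (simp add: ren_Fract[OF st] ren_Fract[OF t] ren_Fract[OF s] ren_eq0[OF t] ren_comp[OF s t])
qed


lemma perm_ge1: "p permutes {1..(m::nat)} \<Longrightarrow> n \<ge> 1 \<Longrightarrow> p n \<ge> 1"
  by (metis atLeastAtMost_iff permutes_in_image permutes_not_in)

lemma vp_inv:
  assumes w: "w permutes {1..(m::nat)}"
  shows "var_perm w \<circ> var_perm (inv w) = id"
proof (rule ext)
  fix k
  have iw: "inv w permutes {1..m}" using permutes_inv[OF w] .
  show "(var_perm w \<circ> var_perm (inv w)) k = id k"
    using perm_ge1[OF iw, of "k - 1"] permutes_inverses(1)[OF w]
    by (auto simp: var_perm_def)
qed

lemma vp_bij:
  assumes w: "w permutes {1..(m::nat)}"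
  shows "bij (var_perm w)"
proof (rule o_bij)
  show "var_perm w \<circ> var_perm (inv w) = id" by (rule vp_inv[OF w])
  have "var_perm (inv w) \<circ> var_perm (inv (inv w)) = id" by (rule vp_inv[OF permutes_inv[OF w]])
  then show "var_perm (inv w) \<circ> var_perm w = id"
    using w by (simp add: permutes_inv_inv)
qed

lemma vp_comp:
  assumes w: "w permutes {1..(m::nat)}" and s: "s permutes {1..m}"
  shows "var_perm (w \<circ> s) = var_perm w \<circ> var_perm s"
proof (rule ext)
  fix k
  show "var_perm (w \<circ> s) k = (var_perm w \<circ> var_perm s) k"
    using perm_ge1[OF s, of "k - 1"] by (auto simp: var_perm_def)
qed

context fixes w :: "nat \<Rightarrow> nat" and m :: nat assumes w: "w permutes {1..m}"
begin
lemma act_add: "act w (x + y) = act w x + act w y" unfolding act_def by (rule R_add[OF vp_bij[OF w]])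
lemma act_mult: "act w (x * y) = act w x * act w y" unfolding act_def by (rule R_mult[OF vp_bij[OF w]])
lemma act_diff: "act w (x - y) = act w x - act w y" unfolding act_def by (rule R_diff[OF vp_bij[OF w]])
lemma act_divide: "act w (x / y) = act w x / act w y" unfolding act_def by (rule R_divide[OF vp_bij[OF w]])
lemma act_uminus: "act w (- x) = - act w x" unfolding act_def by (rule R_uminus[OF vp_bij[OF w]])
lemma act_one: "act w 1 = 1" unfolding act_def by (rule R_one[OF vp_bij[OF w]])
lemma act_prod: "act w (prod g A) = (\<Prod>a\<in>A. act w (g a))" unfolding act_def by (rule R_prod[OF vp_bij[OF w]])
lemma act_qv: "act w qv = qv" unfolding act_def qv_def by (simp add: R_X[OF vp_bij[OF w]] var_perm_def)
lemma act_tv: "act w tv = tv" unfolding act_def tv_def by (simp add: R_X[OF vp_bij[OF w]] var_perm_def)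
lemma act_zv: "j \<ge> 1 \<Longrightarrow> act w (zv j) = zv (w j)"
  unfolding act_def zv_def by (simp add: R_X[OF vp_bij[OF w]] var_perm_def)
lemma act_comp: "s permutes {1..m} \<Longrightarrow> act (w \<circ> s) x = act w (act s x)"
  unfolding act_def by (simp add: vp_comp[OF w] R_comp[OF vp_bij[OF w] vp_bij])
end


definition Xm :: "(nat \<Rightarrow>\<^sub>0 nat) \<Rightarrow> ratfun" where
  "Xm \<alpha> = Fract (Poly_Mapping.single \<alpha> 1) 1"

lemma Xv_Xm: "Xv k = Xm (Poly_Mapping.single k 1)" by (simp add: Xv_def Xm_def)
lemma Xm_mult: "Xm \<alpha> * Xm \<beta> = Xm (\<alpha> + \<beta>)" by (simp add: Xm_def mult_single)
lemma Xm_nz: "Xm \<alpha> \<noteq> 0"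
proof -
  have "Poly_Mapping.single \<alpha> (1::rat) \<noteq> 0" by (metis lookup_single_eq lookup_zero one_neq_zero)
  then show ?thesis by (simp add: Xm_def fract_expand eq_fract)
qed
lemma Xm_eq: "Xm \<alpha> = Xm \<beta> \<longleftrightarrow> \<alpha> = \<beta>"
  by (simp add: Xm_def eq_fract) (metis inj_single injD one_neq_zero lookup_single_eq lookup_single_not_eq)

lemma ne1: "\<alpha> \<noteq> \<beta> \<Longrightarrow> 1 - Xm \<alpha> / Xm \<beta> \<noteq> 0"
  using Xm_nz[of \<beta>] by (auto simp: Xm_eq)

lemma zv_nz: "zv k \<noteq> 0" by (simp add: zv_def Xv_Xm Xm_nz)

lemma nz_all:
  assumes "k \<noteq> l" and l1: "l \<ge> 1"
  shows "1 - zv k / zv l \<noteq> 0" "1 - qv * zv k / zv l \<noteq> 0"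
        "1 - tv * zv k / zv l \<noteq> 0" "1 - qv * tv * zv k / zv l \<noteq> 0"
proof -
  let ?s = "\<lambda>n. Poly_Mapping.single n (1::nat)"
  have e1: "?s (Suc k) \<noteq> ?s (Suc l)" using assms
    by (metis Suc_inject lookup_single_eq lookup_single_not_eq zero_neq_one)
  have l0: "lk (?s 0 + \<alpha>) 0 \<noteq> lk (?s (Suc l)) 0" if "lk \<alpha> 0 = 0" for \<alpha>
    using that by (simp add: lookup_add lookup_single)
  have e2: "?s 0 + ?s (Suc k) \<noteq> ?s (Suc l)" using l0[of "?s (Suc k)"] by (auto simp: lookup_single)
  have e3: "?s 1 + ?s (Suc k) \<noteq> ?s (Suc l)"
  proof
    assume "?s 1 + ?s (Suc k) = ?s (Suc l)"
    then have "lk (?s 1 + ?s (Suc k)) 1 = lk (?s (Suc l)) 1" by simp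
    then show False using l1 by (simp add: lookup_add lookup_single)
  qed
  have e4: "?s 0 + ?s 1 + ?s (Suc k) \<noteq> ?s (Suc l)"
  proof
    assume "?s 0 + ?s 1 + ?s (Suc k) = ?s (Suc l)"
    then have "lk (?s 0 + ?s 1 + ?s (Suc k)) 0 = lk (?s (Suc l)) 0" by simp
    then show False by (simp add: lookup_add lookup_single)
  qed
  show "1 - zv k / zv l \<noteq> 0" using ne1[OF e1] by (simp add: zv_def Xv_Xm)
  show "1 - qv * zv k / zv l \<noteq> 0" using ne1[OF e2] by (simp add: zv_def qv_def Xv_Xm Xm_mult)
  show "1 - tv * zv k / zv l \<noteq> 0" using ne1[OF e3] by (simp add: zv_def tv_def Xv_Xm Xm_mult)
  show "1 - qv * tv * zv k / zv l \<noteq> 0" using ne1[OF e4] by (simp add: zv_def qv_def tv_def Xv_Xm Xm_mult)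
qed

lemma omK:
  fixes q t x :: "'a::field"
  assumes "1 - q*x \<noteq> 0" "1 - t*x \<noteq> 0" "1 - q*t*x \<noteq> 0"
  shows "((1 - q*x)*(1 - t*x))/((1 - x)*(1 - q*t*x)) * ((1 - q*t*x)/((1 - q*x)*(1 - t*x))) = 1/(1 - x)"
proof -
  have g: "\<And>A C D :: 'a. A \<noteq> 0 \<Longrightarrow> C \<noteq> 0 \<Longrightarrow> A/(D*C) * (C/A) = 1/D"
    by (case_tac "D = 0") (simp_all add: field_simps)
  show ?thesis using g[of "(1 - q*x)*(1 - t*x)" "1 - q*t*x" "1 - x"] assms by simp
qed

lemma key_field:
  fixes q t a b :: "'a::field"
  assumes "1 - q*(a/b) \<noteq> 0" "1 - t*(a/b) \<noteq> 0" "1 - q*t*(a/b) \<noteq> 0"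
    "1 - q*(b/a) \<noteq> 0" "1 - t*(b/a) \<noteq> 0" "1 - q*t*(b/a) \<noteq> 0"
  shows "((1 - q*(a/b))*(1 - t*(a/b)))/((1 - a/b)*(1 - q*t*(a/b))) *
           (((1 - q*t*(a/b))/((1 - q*(a/b))*(1 - t*(a/b))))/(1 - b/a))
       = ((1 - q*(b/a))*(1 - t*(b/a)))/((1 - b/a)*(1 - q*t*(b/a))) *
           (((1 - q*t*(b/a))/((1 - q*(b/a))*(1 - t*(b/a))))/(1 - a/b))"
proof -
  have "\<And>u v w :: 'a. u * (v / w) = (u * v) / w" by simp
  then have L: "\<And>x y. 1 - q*x \<noteq> 0 \<Longrightarrow> 1 - t*x \<noteq> 0 \<Longrightarrow> 1 - q*t*x \<noteq> 0 \<Longrightarrow>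
     ((1 - q*x)*(1 - t*x))/((1 - x)*(1 - q*t*x)) * (((1 - q*t*x)/((1 - q*x)*(1 - t*x)))/y) = 1/((1-x)*y)"
    by (metis (no_types, lifting) omK divide_divide_eq_left)
  show ?thesis using L[OF assms(1-3), of "1 - b/a"] L[OF assms(4-6), of "1 - a/b"] by (simp add: mult.commute)
qed


lemma two_nz: "(2::ratfun) \<noteq> 0"
proof -
  have "(of_nat 2 :: rpoly) \<noteq> 0" by (metis of_nat_eq_0_iff zero_neq_numeral)
  then have "(of_nat 2 :: ratfun) \<noteq> 0" by (simp only: of_nat_fract) (simp add: fract_expand eq_fract)
  then show ?thesis by simp
qed

theorem lemma4p2p2:
  fixes m i :: nat and f :: ratfun
  assumes "m \<ge> 2" and "1 \<le> i" and "i \<le> m - 1"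
    and "ratfun_in_vars {0..Suc m} f"
    and "act (Transposition.transpose i (Suc i)) f = - f"
  shows "Hqt m (OmegaM (zv i / zv (Suc i)) * f) = 0"
proof -
  define s where "s = Transposition.transpose i (Suc i)"
  have sp: "s permutes {1..m}" unfolding s_def using assms by (intro permutes_swap_id) auto
  have actf: "act s f = - f" using assms(5) s_def by simp
  define F where "F j k = ((1 - qv*tv*zv j/zv k)/((1 - qv*zv j/zv k)*(1 - tv*zv j/zv k))) / (1 - zv k/zv j)" for j k
  define P where "P = Sigma {1..m} (\<lambda>j. {j<..m})"
  define Om where "Om = OmegaM (zv i / zv (Suc i))"
  define G where "G = (Om * f * (\<Prod>j\<in>{1..m}. \<Prod>k\<in>{j<..m}.
      (1 - qv * tv * zv j / zv k) / ((1 - qv * zv j / zv k) * (1 - tv * zv j / zv k))))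
      / (\<Prod>j\<in>{1..m}. \<Prod>k\<in>{j<..m}. (1 - zv k / zv j))"
  have H: "Hqt m (Om * f) = (\<Sum>w | w permutes {1..m}. act w G)"
    unfolding Hqt_def symz_def G_def ..
  have PS: "(\<Prod>(j,k)\<in>P. F j k) = (\<Prod>j\<in>{1..m}. \<Prod>k\<in>{j<..m}. F j k)"
    by (simp add: P_def prod.Sigma)
  have G2: "G = Om * f * (\<Prod>(j,k)\<in>P. F j k)"
  proof -
    have "G = Om * f * ((\<Prod>j\<in>{1..m}. \<Prod>k\<in>{j<..m}.
      (1 - qv * tv * zv j / zv k) / ((1 - qv * zv j / zv k) * (1 - tv * zv j / zv k)))
      / (\<Prod>j\<in>{1..m}. \<Prod>k\<in>{j<..m}. (1 - zv k / zv j)))"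
      unfolding G_def by (rule times_divide_eq_right[symmetric])
    also have "\<dots> = Om * f * (\<Prod>j\<in>{1..m}. \<Prod>k\<in>{j<..m}. F j k)"
      unfolding F_def by (simp only: prod_dividef[symmetric])
    finally show ?thesis using PS by simp
  qed
  have finP: "finite P" unfolding P_def by simp
  have actP: "act s (\<Prod>(j,k)\<in>P. F j k) = (\<Prod>(j,k)\<in>P. F (s j) (s k))"
    unfolding act_prod[OF sp]
  proof (rule prod.cong)
    fix p assume "p \<in> P"
    then obtain j k where p: "p = (j,k)" "j \<ge> 1" "k \<ge> 1" unfolding P_def by auto
    show "act s (case p of (j, k) \<Rightarrow> F j k) = (case p of (j, k) \<Rightarrow> F (s j) (s k))"
      using p by (simp add: F_def act_divide[OF sp] act_mult[OF sp] act_diff[OF sp] act_one[OF sp]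
          act_qv[OF sp] act_tv[OF sp] act_zv[OF sp])
  qed simp
  define P' where "P' = P - {(i, Suc i)}"
  have Pins: "P = insert (i, Suc i) P'" "(i, Suc i) \<notin> P'" "finite P'"
    using assms finP unfolding P'_def P_def by auto
  have reidx: "(\<Prod>(j,k)\<in>P'. F (s j) (s k)) = (\<Prod>(j,k)\<in>P'. F j k)"
  proof (rule prod.reindex_bij_witness[where i="\<lambda>(j,k). (s j, s k)" and j="\<lambda>(j,k). (s j, s k)"])
    fix a assume "a \<in> P'"
    then show "(case case a of (j, k) \<Rightarrow> (s j, s k) of (j, k) \<Rightarrow> (s j, s k)) = a"
      by (cases a) (auto simp: s_def transpose_def)
  next
    fix a assume "a \<in> P'"
    then show "(case a of (j, k) \<Rightarrow> (s j, s k)) \<in> P'"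
      using assms by (auto simp: s_def P'_def P_def transpose_def split: if_splits)
  next
    fix a assume "a \<in> P'"
    then show "(case case a of (j, k) \<Rightarrow> (s j, s k) of (j, k) \<Rightarrow> (s j, s k)) = a"
      by (cases a) (auto simp: s_def transpose_def)
  next
    fix a assume "a \<in> P'"
    then show "(case a of (j, k) \<Rightarrow> (s j, s k)) \<in> P'"
      using assms by (auto simp: s_def P'_def P_def transpose_def split: if_splits)
  next
    fix a assume "a \<in> P'"
    then show "(case case a of (j, k) \<Rightarrow> (s j, s k) of (j, k) \<Rightarrow> F j k) = (case a of (j, k) \<Rightarrow> F (s j) (s k))"
      by (cases a) simp
  qed
  have si: "s i = Suc i" "s (Suc i) = i" by (simp_all add: s_def)
  have actO: "act s Om = OmegaM (zv (Suc i) / zv i)"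
    using assms by (simp add: Om_def OmegaM_def act_divide[OF sp] act_mult[OF sp] act_diff[OF sp] act_one[OF sp]
          act_qv[OF sp] act_tv[OF sp] act_zv[OF sp] si)
  have key: "OmegaM (zv (Suc i) / zv i) * F (Suc i) i = Om * F i (Suc i)"
    unfolding OmegaM_def Om_def F_def
    using key_field[of qv "zv i" "zv (Suc i)" tv] nz_all[of i "Suc i"] nz_all[of "Suc i" i] assms
    by simp
  have actG: "act s G = - G"
  proof -
    have "act s G = OmegaM (zv (Suc i) / zv i) * (- f) * (F (Suc i) i * (\<Prod>(j,k)\<in>P'. F j k))"
      unfolding G2 act_mult[OF sp] actO actf actP using Pins reidx si by simp
    also have "\<dots> = - (Om * f * (F i (Suc i) * (\<Prod>(j,k)\<in>P'. F j k)))"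
      using key by (simp add: algebra_simps)
    also have "\<dots> = - G" unfolding G2 using Pins by simp
    finally show ?thesis .
  qed
  have ss: "s \<circ> s = id" by (simp add: s_def fun_eq_iff)
  define S where "S = (\<Sum>w | w permutes {1..m}. act w G)"
  have "S = (\<Sum>w | w permutes {1..m}. act (w \<circ> s) G)"
    unfolding S_def
  proof (rule sum.reindex_bij_witness[where i="\<lambda>w. w \<circ> s" and j="\<lambda>w. w \<circ> s"])
    have ss: "s \<circ> s = id" by (simp add: s_def fun_eq_iff)
    fix a assume "a \<in> {w. w permutes {1..m}}"
    then show "a \<circ> s \<circ> s = a" "a \<circ> s \<in> {w. w permutes {1..m}}"
      using ss sp by (auto simp: o_assoc[symmetric] permutes_compose)
  next
    have ss: "s \<circ> s = id" by (simp add: s_def fun_eq_iff)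
    fix b assume "b \<in> {w. w permutes {1..m}}"
    then show "b \<circ> s \<circ> s = b" "b \<circ> s \<in> {w. w permutes {1..m}}"
      using ss sp by (auto simp: o_assoc[symmetric] permutes_compose)
  qed (simp add: o_assoc[symmetric] ss)
  also have "\<dots> = (\<Sum>w | w permutes {1..m}. - act w G)"
  proof (rule sum.cong)
    fix w assume "w \<in> {w. w permutes {1..m}}"
    then have w: "w permutes {1..m}" by simp
    show "act (w \<circ> s) G = - act w G"
      using act_comp[OF w sp] act_uminus[OF w] actG by simp
  qed simp
  also have "\<dots> = - S" by (simp add: S_def sum_negf)
  finally have "S + S = 0" by simp
  then have "2 * S = 0" by (metis mult_2)
  then have "S = 0" using two_nz by simp
  then show ?thesis using H S_def Om_def by simp
qed

end
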